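(* Let $\alpha\ge -1/2$. For every $0\le x\le 2\sqrt{\alpha+1}$ and every $m\in\mathbb{N}\cup\{0\}$, $$\Gamma(\alpha+1)\sum_{n=0}^{2m+1}\frac{(-1)^n(x/2)^{2n}}{n!\,\Gamma(n+\alpha+1)}\ \le\ j_\alpha(x)\ \le\ \Gamma(\alpha+1)\sum_{n=0}^{2m}\frac{(-1)^n(x/2)^{2n}}{n!\,\Gamma(n+\alpha+1)}.$$
   Context: For $\alpha\ge -1/2$, the normalized Bessel function of order $\alpha$ is $j_\alpha(x)=\Gamma(\alpha+1)\sum_{n=0}^\infty\frac{(-1)^n(x/2)^{2n}}{n!\,\Gamma(n+\alpha+1)}$, where $\Gamma$ is the Euler gamma function. *)

theory Defs
  imports "HOL-Analysis.Analysis"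
begin

definition bessel_term :: "real \<Rightarrow> real \<Rightarrow> nat \<Rightarrow> real" where
  "bessel_term \<alpha> x n = (-1) ^ n * (x / 2) ^ (2 * n) / (fact n * Gamma (real n + \<alpha> + 1))"

definition normalized_bessel :: "real \<Rightarrow> real \<Rightarrow> real" where
  "normalized_bessel \<alpha> x = Gamma (\<alpha> + 1) * (\<Sum>n. bessel_term \<alpha> x n)"

end

theory Submission
  imports Defs
begin

lemma Gamma_step:
  fixes z :: real assumes "z > 0"
  shows "Gamma (z + 1) = z * Gamma z"
proof -
  have "z \<notin> \<int>\<^sub>\<le>\<^sub>0" using assms by (auto elim!: nonpos_Ints_cases)
  thus ?thesis by (rule Gamma_plus1)
qed

theorem mainTheorem7:
  fixes \<alpha> x :: real and m :: nat
  assumes "\<alpha> \<ge> -1/2" and "0 \<le> x" and "x \<le> 2 * sqrt (\<alpha> + 1)"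
  shows "Gamma (\<alpha> + 1) * (\<Sum>n\<le>2*m+1. bessel_term \<alpha> x n) \<le> normalized_bessel \<alpha> x
       \<and> normalized_bessel \<alpha> x \<le> Gamma (\<alpha> + 1) * (\<Sum>n\<le>2*m. bessel_term \<alpha> x n)"
proof -
  define a where "a n = (x/2)^(2*n) / (fact n * Gamma (real n + \<alpha> + 1))" for n
  define q where "q = (x/2)^2"
  have bt: "bessel_term \<alpha> x n = (-1)^n * a n" for n
    unfolding bessel_term_def a_def by simp
  have Gpos: "Gamma (real n + \<alpha> + 1) > 0" for n
    using assms(1) by (intro Gamma_real_pos) linarith
  have q0: "q \<ge> 0" unfolding q_def by simp
  have qle: "q \<le> \<alpha> + 1"
  proof -
    have "x/2 \<le> sqrt (\<alpha>+1)" using assms(3) by simp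
    hence "(x/2)^2 \<le> (sqrt (\<alpha>+1))^2" using assms(2) by (intro power_mono) auto
    thus ?thesis using assms(1) unfolding q_def by simp
  qed
  have rec: "a (Suc n) = a n * (q / ((real n + 1) * (real n + \<alpha> + 1)))" for n
  proof -
    have G: "Gamma (real (Suc n) + \<alpha> + 1) = (real n + \<alpha> + 1) * Gamma (real n + \<alpha> + 1)"
      using Gamma_step[of "real n + \<alpha> + 1"] assms(1) by (simp add: add_ac)
    have p: "(x/2)^(2*Suc n) = (x/2)^(2*n) * q" unfolding q_def by (metis mult_Suc_right power_add mult.commute)
    have "real n + \<alpha> + 1 > 0" using assms(1) by linarith
    thus ?thesis unfolding a_def p G using Gpos[of n]
      by (simp add: field_simps)
  qed
  have a0: "0 \<le> a n" for n unfolding a_def using Gpos[of n] by simp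
  have ratio: "q / ((real n + 1) * (real n + \<alpha> + 1)) \<le> 1 / (real n + 1)" for n
  proof -
    have pos: "real n + \<alpha> + 1 > 0" using assms(1) by linarith
    have "q / ((real n + 1) * (real n + \<alpha> + 1)) = (q / (real n + \<alpha> + 1)) / (real n + 1)"
      by (simp add: field_simps)
    also have "q / (real n + \<alpha> + 1) \<le> 1" using pos qle by (simp add: divide_le_eq)
    hence "(q / (real n + \<alpha> + 1)) / (real n + 1) \<le> 1 / (real n + 1)"
      by (intro divide_right_mono) auto
    finally show ?thesis .
  qed
  have mono: "a (Suc n) \<le> a n" for n
  proof -
    have "a (Suc n) \<le> a n * (1 / (real n + 1))" unfolding rec
      using ratio[of n] a0[of n] by (intro mult_left_mono) auto
    also have "\<dots> \<le> a n" using a0[of n] by (simp add: divide_le_eq mult_le_cancel_left1)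
    finally show ?thesis .
  qed
  have summ: "summable a"
  proof (rule summable_ratio_test[where c="1/2" and N=1])
    fix n :: nat assume "n \<ge> 1"
    have "a (Suc n) \<le> a n * (1 / (real n + 1))" unfolding rec
      using ratio[of n] a0[of n] by (intro mult_left_mono) auto
    also have "\<dots> \<le> a n * (1/2)" using a0[of n] \<open>n \<ge> 1\<close>
      by (intro mult_left_mono) (auto simp: divide_simps)
    finally show "norm (a (Suc n)) \<le> 1/2 * norm (a n)" using a0[of n] a0[of "Suc n"] by simp
  qed simp
  have lim: "a \<longlonglongrightarrow> 0" using summ by (rule summable_LIMSEQ_zero)
  note L = summable_Leibniz'[OF lim a0 mono]
  have Gp: "Gamma (\<alpha> + 1) > 0" using assms(1) by (intro Gamma_real_pos) linarith
  have S: "(\<Sum>n. bessel_term \<alpha> x n) = (\<Sum>i. (-1)^i * a i)" by (simp add: bt)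
  have s1: "(\<Sum>n\<le>2*m+1. bessel_term \<alpha> x n) = (\<Sum>i<2*(m+1). (-1)^i * a i)"
    by (simp add: bt lessThan_Suc_atMost[symmetric])
  have s2: "(\<Sum>n\<le>2*m. bessel_term \<alpha> x n) = (\<Sum>i<2*m+1. (-1)^i * a i)"
    by (simp add: bt lessThan_Suc_atMost[symmetric])
  show ?thesis unfolding normalized_bessel_def S s1 s2
    using L(2)[of "m+1"] L(4)[of m] Gp by (auto intro: mult_left_mono)
qed

end
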